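(* For every 1-2-metric and every $\alpha>0$, the greedy-routing network creation game on it with edge price $\alpha$ admits no best response cycle.
   Context: A 1-2-metric is a finite metric space $(\mathcal{P},d)$ with $d(u,v)\in\{1,2\}$ for all distinct $u,v$. Game: agents are the points of $\mathcal{P}$; agent $u$'s strategy is $S_u\subseteq\mathcal{P}\setminus\{u\}$; a profile $\mathbf{s}$ defines the directed network with arcs $(u,v)$, $v\in S_u$, of length $d(u,v)$. A greedy path from $u$ to $v$ is a directed path $u=x_1,\dots,x_j=v$ of arcs with $d(x_i,v)>d(x_{i+1},v)$ for all $i$. $\mathrm{stretch}(u,v)$ is the minimum length of a greedy path from $u$ to $v$ divided by $d(u,v)$, or a fixed sufficiently large penalty constant $Z$ if none exists. Cost: $c_u(\mathbf{s})=\sum_{v\ne u}\mathrm{stretch}(u,v)+\alpha|S_u|$. A best response of $u$ to $\mathbf{s}$ is a strategy minimizing $c_u(\cdot,\mathbf{s}_{-u})$. A best response cycle is a sequence of profiles $\mathbf{s}_0,\dots,\mathbf{s}_k=\mathbf{s}_0$ ($k\ge1$) where each $\mathbf{s}_i$ arises from $\mathbf{s}_{i-1}$ by a single agent switching to a best response that strictly decreases its cost. *)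

theory Defs
  imports Complex_Main
begin

definition metric12 :: "'a set \<Rightarrow> ('a \<Rightarrow> 'a \<Rightarrow> real) \<Rightarrow> bool" where
  "metric12 P d \<longleftrightarrow> finite P \<and>
     (\<forall>u\<in>P. d u u = 0) \<and>
     (\<forall>u\<in>P. \<forall>v\<in>P. d u v = d v u) \<and>
     (\<forall>u\<in>P. \<forall>v\<in>P. u \<noteq> v \<longrightarrow> d u v = 1 \<or> d u v = 2) \<and>
     (\<forall>u\<in>P. \<forall>v\<in>P. \<forall>w\<in>P. d u w \<le> d u v + d v w)"

text \<open>A strategy profile: each agent u in P buys arcs to a subset of P - {u};
  outside P the profile is empty (so profiles are determined by their values on P).\<close>
definition profile :: "'a set \<Rightarrow> ('a \<Rightarrow> 'a set) \<Rightarrow> bool" where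
  "profile P s \<longleftrightarrow> (\<forall>u\<in>P. s u \<subseteq> P - {u}) \<and> (\<forall>u. u \<notin> P \<longrightarrow> s u = {})"

definition greedy_path :: "'a set \<Rightarrow> ('a \<Rightarrow> 'a \<Rightarrow> real) \<Rightarrow> ('a \<Rightarrow> 'a set)
    \<Rightarrow> 'a \<Rightarrow> 'a \<Rightarrow> 'a list \<Rightarrow> bool" where
  "greedy_path P d s u v xs \<longleftrightarrow> xs \<noteq> [] \<and> hd xs = u \<and> last xs = v \<and> set xs \<subseteq> P \<and>
     (\<forall>i. Suc i < length xs \<longrightarrow>
        xs ! (Suc i) \<in> s (xs ! i) \<and> d (xs ! i) v > d (xs ! Suc i) v)"

definition path_len :: "('a \<Rightarrow> 'a \<Rightarrow> real) \<Rightarrow> 'a list \<Rightarrow> real" where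
  "path_len d xs = (\<Sum>i<length xs - 1. d (xs ! i) (xs ! Suc i))"

definition stretch :: "'a set \<Rightarrow> ('a \<Rightarrow> 'a \<Rightarrow> real) \<Rightarrow> real \<Rightarrow> ('a \<Rightarrow> 'a set)
    \<Rightarrow> 'a \<Rightarrow> 'a \<Rightarrow> real" where
  "stretch P d Z s u v =
     (if \<exists>xs. greedy_path P d s u v xs
      then Min {path_len d xs | xs. greedy_path P d s u v xs} / d u v
      else Z)"

definition cost :: "'a set \<Rightarrow> ('a \<Rightarrow> 'a \<Rightarrow> real) \<Rightarrow> real \<Rightarrow> real \<Rightarrow> ('a \<Rightarrow> 'a set)
    \<Rightarrow> 'a \<Rightarrow> real" where
  "cost P d \<alpha> Z s u = (\<Sum>v\<in>P - {u}. stretch P d Z s u v) + \<alpha> * real (card (s u))"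

definition best_response :: "'a set \<Rightarrow> ('a \<Rightarrow> 'a \<Rightarrow> real) \<Rightarrow> real \<Rightarrow> real
    \<Rightarrow> ('a \<Rightarrow> 'a set) \<Rightarrow> 'a \<Rightarrow> 'a set \<Rightarrow> bool" where
  "best_response P d \<alpha> Z s u S \<longleftrightarrow> S \<subseteq> P - {u} \<and>
     (\<forall>S'. S' \<subseteq> P - {u} \<longrightarrow> cost P d \<alpha> Z (s(u := S)) u \<le> cost P d \<alpha> Z (s(u := S')) u)"

definition br_cycle :: "'a set \<Rightarrow> ('a \<Rightarrow> 'a \<Rightarrow> real) \<Rightarrow> real \<Rightarrow> real \<Rightarrow> bool" where
  "br_cycle P d \<alpha> Z \<longleftrightarrow> (\<exists>k::nat. \<exists>seq :: nat \<Rightarrow> ('a \<Rightarrow> 'a set).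
     k \<ge> 1 \<and> profile P (seq 0) \<and> seq k = seq 0 \<and>
     (\<forall>i<k. \<exists>u\<in>P. \<exists>S. seq (Suc i) = (seq i)(u := S) \<and>
        best_response P d \<alpha> Z (seq i) u S \<and>
        cost P d \<alpha> Z (seq (Suc i)) u < cost P d \<alpha> Z (seq i) u))"

end

theory Submission
  imports Defs
begin

lemma m12_vals:
  assumes "metric12 P d" "a \<in> P" "b \<in> P"
  shows "(a = b \<and> d a b = 0) \<or> (a \<noteq> b \<and> (d a b = 1 \<or> d a b = 2))"
  using assms by (cases "a = b") (auto simp: metric12_def)

lemma gp_inner:
  assumes m: "metric12 P d" and g: "greedy_path P d s u v xs"
    and i: "Suc i < length xs" "0 < i"
  shows "xs ! Suc i = v \<and> d (xs!i) v = 1"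
proof -
  have P: "set xs \<subseteq> P" "xs \<noteq> []" "hd xs = u" "last xs = v"
    and st: "\<And>i. Suc i < length xs \<Longrightarrow> xs ! Suc i \<in> s (xs!i) \<and> d (xs!i) v > d (xs!Suc i) v"
    using g unfolding greedy_path_def by auto
  have vP: "v \<in> P" using P last_in_set by blast
  have inP: "\<And>j. j < length xs \<Longrightarrow> xs!j \<in> P" using P(1) nth_mem by blast
  have lt2: "0<j \<Longrightarrow> j < length xs \<Longrightarrow> d (xs!j) v < 2" for j
  proof (induction j)
    case 0 then show ?case by simp
  next
    case (Suc j)
    show ?case
    proof (cases "j = 0")
      case True
      have "0 < length xs" using Suc.prems by (cases xs) auto
      then have x0: "xs!0 \<in> P" by (rule inP)
      have "d (xs!0) v \<le> 2" using m12_vals[OF m x0 vP] by auto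
      moreover have "d (xs!0) v > d (xs ! Suc 0) v" using st[of 0] Suc.prems True by auto
      ultimately show ?thesis using True by simp
    next
      case False
      then have "d (xs!j) v < 2" using Suc by simp
      moreover have "d (xs!j) v > d (xs!Suc j) v" using st[of j] Suc.prems by simp
      ultimately show ?thesis by simp
    qed
  qed
  have a: "d (xs!i) v < 2" using lt2 i by simp
  have b: "d (xs!i) v > d (xs!Suc i) v" using st i by simp
  have c1: "(xs!i = v \<and> d (xs!i) v = 0) \<or> (xs!i \<noteq> v \<and> (d (xs!i) v = 1 \<or> d (xs!i) v = 2))"
    using m12_vals[OF m inP vP] i by simp
  have c2: "(xs!Suc i = v \<and> d (xs!Suc i) v = 0) \<or> (xs!Suc i \<noteq> v \<and> (d (xs!Suc i) v = 1 \<or> d (xs!Suc i) v = 2))"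
    using m12_vals[OF m inP vP] i by simp
  from a b c1 c2 show ?thesis by auto
qed

lemma gp_len:
  assumes m: "metric12 P d" and g: "greedy_path P d s u v xs"
  shows "length xs \<le> 3"
proof (rule ccontr)
  assume "\<not> length xs \<le> 3"
  then have l: "Suc 1 < length xs" "Suc 2 < length xs" by auto
  have "xs ! Suc 1 = v" using gp_inner[OF m g l(1)] by simp
  moreover have "d (xs ! 2) v = 1" using gp_inner[OF m g l(2)] by simp
  moreover have "v \<in> P" using g unfolding greedy_path_def using last_in_set by blast
  ultimately show False using m by (auto simp: metric12_def numeral_2_eq_2)
qed

lemma gp_transfer:
  assumes m: "metric12 P d" and su: "s' u = s u"
    and T: "\<forall>w\<in>P. {x\<in>s w. d w x = 1} \<subseteq> {x\<in>s' w. d w x = 1}"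
    and g: "greedy_path P d s u v xs"
  shows "greedy_path P d s' u v xs"
proof -
  have "\<forall>i. Suc i < length xs \<longrightarrow> xs ! Suc i \<in> s' (xs!i)"
  proof (intro allI impI)
    fix i assume i: "Suc i < length xs"
    have mem: "xs ! Suc i \<in> s (xs!i)" using g i unfolding greedy_path_def by blast
    show "xs ! Suc i \<in> s' (xs ! i)"
    proof (cases "i = 0")
      case True
      have "xs!0 = u" using g by (auto simp: greedy_path_def hd_conv_nth)
      then show ?thesis using mem True su by simp
    next
      case False
      have "d (xs!i) (xs!Suc i) = 1" using gp_inner[OF m g i] False by simp
      moreover have "i < length xs" using i by simp
      then have "xs!i \<in> P" using g unfolding greedy_path_def
        using nth_mem by blast
      ultimately show ?thesis using T mem by blast
    qed
  qed
  then show ?thesis using g unfolding greedy_path_def by blast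
qed

lemma cost_eq:
  assumes m: "metric12 P d" and su: "s' u = s u"
    and T: "\<forall>w\<in>P. {x\<in>s w. d w x = 1} = {x\<in>s' w. d w x = 1}"
  shows "cost P d \<alpha> Z s u = cost P d \<alpha> Z s' u"
proof -
  have e: "greedy_path P d s u v xs = greedy_path P d s' u v xs" for v xs
    using gp_transfer[where P=P and d=d and s'=s' and s=s and u=u and v=v and xs=xs, OF m su]
      gp_transfer[where P=P and d=d and s'=s and s=s' and u=u and v=v and xs=xs, OF m su[symmetric]] T by auto
  have "stretch P d Z s u v = stretch P d Z s' u v" for v
    unfolding stretch_def e ..
  then show ?thesis by (simp add: cost_def su)
qed

lemma gp_mono:
  assumes "\<forall>w. s w \<subseteq> s' w" "greedy_path P d s u v xs"
  shows "greedy_path P d s' u v xs"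
  using assms unfolding greedy_path_def by blast

lemma gp_fin:
  assumes m: "metric12 P d"
  shows "finite {path_len d xs | xs. greedy_path P d s u v xs}"
proof -
  have sub: "{path_len d xs | xs. greedy_path P d s u v xs} \<subseteq> path_len d ` {xs. set xs \<subseteq> P \<and> length xs \<le> 3}"
  proof
    fix y assume "y \<in> {path_len d xs | xs. greedy_path P d s u v xs}"
    then obtain xs where y: "y = path_len d xs" and g: "greedy_path P d s u v xs" by blast
    have "set xs \<subseteq> P" using g unfolding greedy_path_def by blast
    moreover have "length xs \<le> 3" using gp_len[OF m g] .
    ultimately show "y \<in> path_len d ` {xs. set xs \<subseteq> P \<and> length xs \<le> 3}" using y by blast
  qed
  have "finite P" using m by (simp add: metric12_def)
  then have "finite {xs. set xs \<subseteq> P \<and> length xs \<le> 3}" by (rule finite_lists_length_le)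
  then have "finite (path_len d ` {xs. set xs \<subseteq> P \<and> length xs \<le> 3})" by (rule finite_imageI)
  then show ?thesis using sub by (rule finite_subset[rotated])
qed

lemma pl_le:
  assumes m: "metric12 P d" and g: "greedy_path P d s u v xs"
  shows "path_len d xs \<le> 4"
proof -
  have sP: "set xs \<subseteq> P" using g unfolding greedy_path_def by blast
  have "\<And>i. i \<in> {..<length xs - 1} \<Longrightarrow> d (xs!i) (xs!Suc i) \<le> 2"
  proof -
    fix i assume "i \<in> {..<length xs - 1}"
    then have l: "i < length xs" "Suc i < length xs" by auto
    have a: "xs!i \<in> P" using nth_mem[OF l(1)] sP by blast
    have b: "xs!Suc i \<in> P" using nth_mem[OF l(2)] sP by blast
    show "d (xs!i) (xs!Suc i) \<le> 2" using m12_vals[OF m a b] by auto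
  qed
  then have "path_len d xs \<le> real (card {..<length xs - 1}) * 2"
    unfolding path_len_def by (rule sum_bounded_above)
  also have "\<dots> \<le> 4" using gp_len[OF m g] by simp
  finally show ?thesis .
qed

lemma stretch_exists_le:
  assumes m: "metric12 P d" and uv: "u \<in> P" "v \<in> P" "u \<noteq> v"
    and g: "greedy_path P d s u v xs"
  shows "stretch P d Z s u v \<le> 4"
proof -
  let ?A = "{path_len d xs | xs. greedy_path P d s u v xs}"
  have "Min ?A \<le> path_len d xs" using gp_fin[OF m] g by (intro Min_le) auto
  also have "\<dots> \<le> 4" using pl_le[OF m g] .
  finally have a: "Min ?A \<le> 4" .
  have d1: "d u v \<ge> 1" using m12_vals[OF m uv(1,2)] uv(3) by auto
  have "Min ?A / d u v \<le> 4" using a d1 by (simp add: pos_divide_le_eq)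
  then show ?thesis using g unfolding stretch_def by auto
qed

lemma stretch_le:
  assumes m: "metric12 P d" and uv: "u \<in> P" "v \<in> P" "u \<noteq> v" and Z: "Z \<ge> 4"
  shows "stretch P d Z s u v \<le> Z"
proof (cases "\<exists>xs. greedy_path P d s u v xs")
  case True
  then obtain xs where "greedy_path P d s u v xs" by blast
  then have "stretch P d Z s u v \<le> 4" by (rule stretch_exists_le[OF m uv])
  then show ?thesis using Z by linarith
next
  case False then show ?thesis by (simp only: stretch_def if_not_P[OF False] if_False order_refl)
qed

lemma stretch_mono:
  assumes m: "metric12 P d" and uv: "u \<in> P" "v \<in> P" "u \<noteq> v" and Z: "Z \<ge> 4"
    and sub: "\<forall>w. s w \<subseteq> s' w"
  shows "stretch P d Z s' u v \<le> stretch P d Z s u v"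
proof (cases "\<exists>xs. greedy_path P d s u v xs")
  case True
  then obtain xs where g: "greedy_path P d s u v xs" by blast
  have g': "greedy_path P d s' u v xs" using gp_mono[OF sub g] .
  let ?A = "{path_len d xs | xs. greedy_path P d s u v xs}"
  let ?B = "{path_len d xs | xs. greedy_path P d s' u v xs}"
  have "?A \<subseteq> ?B" using gp_mono[OF sub] by blast
  moreover have "?A \<noteq> {}" using g by blast
  ultimately have "Min ?B \<le> Min ?A" using gp_fin[OF m] by (intro Min_antimono) auto
  moreover have d1: "d u v \<ge> 1" using m12_vals[OF m uv(1,2)] uv(3) by auto
  ultimately have "Min ?B / d u v \<le> Min ?A / d u v" by (simp add: divide_right_mono)
  then show ?thesis using g g' unfolding stretch_def by auto
next
  case False
  then have "stretch P d Z s u v = Z" by (simp only: stretch_def if_not_P[OF False] if_False)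
  then show ?thesis using stretch_le[OF m uv Z] by simp
qed

lemma br_contains:
  assumes m: "metric12 P d" and Z: "Z \<ge> 6 + \<alpha>" and a: "\<alpha> > 0"
    and br: "best_response P d \<alpha> Z s u S" and uP: "u \<in> P" and xP: "x \<in> P" and dx: "d u x = 1"
  shows "x \<in> S"
proof (rule ccontr)
  assume xS: "x \<notin> S"
  have SP: "S \<subseteq> P - {u}" using br unfolding best_response_def by blast
  have xu: "x \<noteq> u" using dx m uP by (auto simp: metric12_def)
  have fin: "finite P" using m by (simp add: metric12_def)
  let ?s1 = "s(u := S)" and ?s2 = "s(u := insert x S)"
  have ins: "insert x S \<subseteq> P - {u}" using SP xP xu by blast
  have brall: "\<forall>S'. S' \<subseteq> P - {u} \<longrightarrow> cost P d \<alpha> Z ?s1 u \<le> cost P d \<alpha> Z (s(u := S')) u"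
    using br unfolding best_response_def by blast
  have le: "cost P d \<alpha> Z ?s1 u \<le> cost P d \<alpha> Z ?s2 u"
    using brall ins by blast
  have nog: "\<not> greedy_path P d ?s1 u x xs" for xs
  proof
    assume g: "greedy_path P d ?s1 u x xs"
    have "length xs \<noteq> 1"
    proof
      assume "length xs = 1"
      then have "hd xs = last xs" by (cases xs) auto
      then show False using g xu unfolding greedy_path_def by simp
    qed
    moreover have "xs \<noteq> []" using g unfolding greedy_path_def by simp
    ultimately have l: "Suc 0 < length xs" by (cases xs) auto
    have u0: "xs!0 = u" using g by (auto simp: greedy_path_def hd_conv_nth)
    have st: "xs ! Suc 0 \<in> S" "d (xs!0) x > d (xs!Suc 0) x"
      using g l u0 unfolding greedy_path_def by auto
    have "xs ! Suc 0 \<in> P" using g l unfolding greedy_path_def by (meson nth_mem subsetD)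
    moreover have "d (xs!Suc 0) x < 1" using st(2) u0 dx by simp
    ultimately have "xs ! Suc 0 = x" using m12_vals[OF m _ xP, of "xs ! Suc 0"] by auto
    then show False using st xS by simp
  qed
  then have "\<not> (\<exists>xs. greedy_path P d ?s1 u x xs)" by blast
  then have s1x: "stretch P d Z ?s1 u x = Z" by (simp only: stretch_def if_not_P if_False)
  have dxx: "d x x = 0" using m xP by (simp add: metric12_def)
  have "\<forall>i. Suc i < length [u,x] \<longrightarrow> [u,x] ! Suc i \<in> ?s2 ([u,x]!i) \<and> d ([u,x]!i) x > d ([u,x]!Suc i) x"
  proof (intro allI impI)
    fix i assume "Suc i < length [u,x]"
    then have "i = 0" by simp
    then show "[u,x] ! Suc i \<in> ?s2 ([u,x]!i) \<and> d ([u,x]!i) x > d ([u,x]!Suc i) x" using dx dxx by simp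
  qed
  then have g2: "greedy_path P d ?s2 u x [u, x]"
    using uP xP unfolding greedy_path_def by simp
  have "Min {path_len d xs | xs. greedy_path P d ?s2 u x xs} \<le> path_len d [u,x]"
    using gp_fin[OF m] g2 by (intro Min_le) auto
  also have "\<dots> = 1" using dx by (simp add: path_len_def)
  finally have s2x: "stretch P d Z ?s2 u x \<le> 1" using g2 dx unfolding stretch_def by auto
  have others: "stretch P d Z ?s2 u v \<le> stretch P d Z ?s1 u v" if "v \<in> P - {u} - {x}" for v
  proof -
    have vP: "v \<in> P" and vu: "u \<noteq> v" using that by auto
    have Z4: "4 \<le> Z" using Z a by linarith
    have "\<forall>w. ?s1 w \<subseteq> ?s2 w" by auto
    then show ?thesis by (rule stretch_mono[OF m uP vP vu Z4])
  qed
  have finr: "finite (P - {u})" using fin by simp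
  have xin: "x \<in> P - {u}" using xP xu by simp
  have sum2: "(\<Sum>v\<in>P - {u}. stretch P d Z ?s2 u v) \<le> (\<Sum>v\<in>P - {u}. stretch P d Z ?s1 u v) - Z + 1"
  proof -
    have "(\<Sum>v\<in>P - {u}. stretch P d Z ?s2 u v) = stretch P d Z ?s2 u x + (\<Sum>v\<in>P - {u} - {x}. stretch P d Z ?s2 u v)"
      using sum.remove[OF finr xin] by simp
    also have "\<dots> \<le> 1 + (\<Sum>v\<in>P - {u} - {x}. stretch P d Z ?s1 u v)"
      using s2x others by (intro add_mono sum_mono) auto
    also have "(\<Sum>v\<in>P - {u} - {x}. stretch P d Z ?s1 u v) = (\<Sum>v\<in>P - {u}. stretch P d Z ?s1 u v) - Z"
      using sum.remove[OF finr xin, of "stretch P d Z ?s1 u"] s1x by simp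
    finally show ?thesis by linarith
  qed
  have finS: "finite S" using SP fin by (meson finite_Diff finite_subset)
  have "card (insert x S) = card S + 1" using finS xS by simp
  then have "cost P d \<alpha> Z ?s2 u \<le> cost P d \<alpha> Z ?s1 u - Z + 1 + \<alpha>"
    using sum2 unfolding cost_def by (simp add: algebra_simps)
  then show False using le Z a by simp
qed

lemma cyc_lemma:
  assumes step: "\<And>i. i<k \<Longrightarrow> g (Suc i) = g i \<or> Q (g (Suc i))" and per: "g k = g 0"
    and j: "j<k" "Q (g (Suc j))" and i: "i \<le> k"
  shows "Q (g i)"
proof -
  have A: "Suc j \<le> m \<Longrightarrow> m \<le> k \<Longrightarrow> Q (g m)" for m
  proof (induction m)
    case 0 then show ?case by simp
  next
    case (Suc m)
    show ?case
    proof (cases "Suc j = Suc m")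
      case True then show ?thesis using j by simp
    next
      case False then have "Suc j \<le> m" using Suc.prems by simp
      then have "Q (g m)" using Suc by simp
      then show ?thesis using step[of m] Suc.prems by auto
    qed
  qed
  have Q0: "Q (g 0)" using A[of k] j per by simp
  have "i \<le> k \<Longrightarrow> Q (g i)"
  proof (induction i)
    case 0 then show ?case using Q0 by simp
  next
    case (Suc i) then show ?case using step[of i] by auto
  qed
  then show ?thesis using i .
qed

lemma const_lemma:
  assumes "\<And>i. i<k \<Longrightarrow> g (Suc i) = g i" "i \<le> k"
  shows "g i = g 0"
  using assms(2) by (induction i) (auto simp: assms(1))

theorem theorem2p10:
  fixes P :: "'a set" and d :: "'a \<Rightarrow> 'a \<Rightarrow> real" and \<alpha> :: real
  assumes "metric12 P d" and "\<alpha> > 0"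
  shows "\<exists>Z0. \<forall>Z\<ge>Z0. \<not> br_cycle P d \<alpha> Z"
proof (intro exI allI impI notI)
  note m = assms(1)
  fix Z assume Z: "6 + \<alpha> \<le> Z" and "br_cycle P d \<alpha> Z"
  then obtain k seq where k: "k \<ge> 1" "seq k = seq 0" and
    steps: "\<forall>i<k. \<exists>u\<in>P. \<exists>S. seq (Suc i) = (seq i)(u:=S) \<and> best_response P d \<alpha> Z (seq i) u S
        \<and> cost P d \<alpha> Z (seq (Suc i)) u < cost P d \<alpha> Z (seq i) u"
    unfolding br_cycle_def by blast
  define N1 where "N1 w = {x\<in>P. d w x = 1}" for w
  define T where "T i w = {x \<in> seq i w. d w x = 1}" for i w
  have Tstep: "T (Suc i) w = T i w \<or> T (Suc i) w = N1 w" if ik: "i < k" and wP: "w \<in> P" for i w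
  proof -
    obtain u S where u: "u \<in> P" "seq (Suc i) = (seq i)(u:=S)" "best_response P d \<alpha> Z (seq i) u S"
      using steps[rule_format, OF ik] by blast
    show ?thesis
    proof (cases "w = u")
      case True
      have SP: "S \<subseteq> P - {u}" using u(3) unfolding best_response_def by blast
      have "T (Suc i) w = N1 w"
        unfolding T_def N1_def using u True SP br_contains[OF m Z assms(2) u(3) u(1)] by auto
      then show ?thesis ..
    next
      case False then show ?thesis unfolding T_def using u by simp
    qed
  qed
  have Tper: "T k w = T 0 w" for w unfolding T_def using k(2) by simp
  have Tconst: "T i w = T 0 w" if ik: "i \<le> k" and wP: "w \<in> P" for i w
  proof (cases "\<exists>j<k. T (Suc j) w \<noteq> T j w")
    case True
    then obtain j where j: "j < k" "T (Suc j) w \<noteq> T j w" by blast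
    then have jn: "T (Suc j) w = N1 w" using Tstep[OF j(1) wP] by simp
    have st: "\<And>i. i < k \<Longrightarrow> T (Suc i) w = T i w \<or> T (Suc i) w = N1 w"
      using Tstep wP by blast
    have a1: "T i w = N1 w"
      using cyc_lemma[of k "\<lambda>i. T i w" "\<lambda>x. x = N1 w", OF st Tper j(1) jn ik] by simp
    have a2: "T 0 w = N1 w"
      using cyc_lemma[of k "\<lambda>i. T i w" "\<lambda>x. x = N1 w", OF st Tper j(1) jn, of 0] by simp
    show ?thesis using a1 a2 by simp
  next
    case False
    then have st: "\<And>j. j < k \<Longrightarrow> T (Suc j) w = T j w" by blast
    show ?thesis using const_lemma[of k "\<lambda>i. T i w", OF st ik] by simp
  qed
  have costinv: "cost P d \<alpha> Z ((seq i)(u:=S)) u = cost P d \<alpha> Z ((seq 0)(u:=S)) u" if "i \<le> k" for i u S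
  proof (rule cost_eq[OF m])
    show "((seq 0)(u := S)) u = ((seq i)(u := S)) u" by simp
    show "\<forall>w\<in>P. {x \<in> ((seq i)(u := S)) w. d w x = 1} = {x \<in> ((seq 0)(u := S)) w. d w x = 1}"
    proof
      fix w assume wP: "w \<in> P"
      show "{x \<in> ((seq i)(u := S)) w. d w x = 1} = {x \<in> ((seq 0)(u := S)) w. d w x = 1}"
      proof (cases "w = u")
        case True then show ?thesis by simp
      next
        case False then show ?thesis using Tconst[OF that wP] unfolding T_def by simp
      qed
    qed
  qed
  have k0: "0 < k" using k(1) by simp
  obtain u S where u: "u \<in> P" "seq (Suc 0) = (seq 0)(u:=S)" "best_response P d \<alpha> Z (seq 0) u S"
    "cost P d \<alpha> Z (seq (Suc 0)) u < cost P d \<alpha> Z (seq 0) u"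
    using steps[rule_format, OF k0] by blast
  define f where "f S' = cost P d \<alpha> Z ((seq 0)(u:=S')) u" for S'
  define Q where "Q S' \<longleftrightarrow> (\<forall>S''. S'' \<subseteq> P - {u} \<longrightarrow> f S' \<le> f S'')" for S'
  have gstep: "seq (Suc i) u = seq i u \<or> Q (seq (Suc i) u)" if ik: "i < k" for i
  proof -
    obtain u' S' where u': "seq (Suc i) = (seq i)(u':=S')" "best_response P d \<alpha> Z (seq i) u' S'"
      using steps[rule_format, OF ik] by blast
    show ?thesis
    proof (cases "u' = u")
      case True
      have "Q S'" unfolding Q_def f_def
        using u'(2) True costinv[of i] ik unfolding best_response_def by simp
      then show ?thesis using u'(1) True by simp
    next
      case False then show ?thesis using u'(1) by simp
    qed
  qed
  have Q1: "Q (seq (Suc 0) u)" using u(2,3) unfolding Q_def f_def best_response_def by simp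
  have per: "seq k u = seq 0 u" using k(2) by simp
  have "Q (seq 0 u)"
    using cyc_lemma[of k "\<lambda>i. seq i u" Q 0 0, OF gstep per k0 Q1] by simp
  moreover have "S \<subseteq> P - {u}" using u(3) unfolding best_response_def by blast
  ultimately have "f (seq 0 u) \<le> f S" unfolding Q_def by blast
  then show False using u(2,4) unfolding f_def by simp
qed

end
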